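(* A sequence $(a_n(q))_{n\ge1}$ in $\mathbb{Z}[q]$ is a $q$-Gauss sequence if and only if there exists a sequence $(g_n(q))_{n\ge1}$ in $\mathbb{Z}[q]$ such that $a_n(q)=\sum_{d\mid n}\left[\tfrac{n}{d}\right]_{q^d}g_{n/d}(q^d)$ for all $n\ge1$.
   Context: $\mu$ is the Möbius function; $[k]_{x}=1+x+\dots+x^{k-1}$, so $[k]_{q^d}=1+q^d+\dots+q^{d(k-1)}$ and $[n]_q=1+q+\dots+q^{n-1}$. A sequence $(a_n(q))$ in $\mathbb{Z}[q]$ is a $q$-Gauss sequence if $[n]_q$ divides $\sum_{d\mid n}\mu(d)a_{n/d}(q^d)$ in $\mathbb{Z}[q]$ for all $n\ge1$. *)

theory Defs
  imports "HOL-Computational_Algebra.Computational_Algebra"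
begin

definition moebius_mu :: "nat \<Rightarrow> int" where
  "moebius_mu n = (if squarefree n then (-1) ^ card (prime_factors n) else 0)"

definition qint :: "nat \<Rightarrow> 'a::comm_semiring_1 \<Rightarrow> 'a" where
  "qint k x = (\<Sum>i<k. x ^ i)"

definition subst_pow :: "int poly \<Rightarrow> nat \<Rightarrow> int poly" where
  "subst_pow p d = pcompose p (monom 1 d)"

definition q_gauss :: "(nat \<Rightarrow> int poly) \<Rightarrow> bool" where
  "q_gauss a \<longleftrightarrow> (\<forall>n\<ge>1. qint n [:0, 1:] dvd
      (\<Sum>d | d dvd n. smult (moebius_mu d) (subst_pow (a (n div d)) d)))"

end

theory Submission
  imports Defs
begin

lemma prod_primes_dvd:
  fixes n :: nat
  assumes "finite S" "\<forall>p\<in>S. prime p \<and> p dvd n"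
  shows "\<Prod>S dvd n"
  using assms
proof (induction S rule: finite_induct)
  case empty then show ?case by simp
next
  case (insert p S)
  have cop: "coprime p (\<Prod>S)"
    by (rule prod_coprime_right) (use insert in \<open>auto intro: primes_coprime\<close>)
  have "p * \<Prod>S dvd n"
    by (rule divides_mult) (use insert cop in auto)
  then show ?case using insert by simp
qed

lemma moebius_prod:
  assumes "finite S" "\<forall>p\<in>S. prime (p::nat)"
  shows "moebius_mu (\<Prod>S) = (-1) ^ card S"
proof -
  have sf: "squarefree (\<Prod>S)"
    by (rule squarefree_prod_coprime) (use assms in \<open>auto intro: primes_coprime squarefree_prime\<close>)
  have "prime_factors (\<Prod>S) = \<Union>((prime_factors \<circ> (\<lambda>x. x)) ` S)"
    by (rule prime_factors_prod) (use assms in \<open>auto\<close>)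
  also have "\<dots> = S" using assms by (auto simp: prime_prime_factors)
  finally show ?thesis using sf by (simp add: moebius_mu_def)
qed

lemma squarefree_prod_pf:
  fixes d :: nat
  assumes "squarefree d"
  shows "\<Prod>(prime_factors d) = d"
proof -
  have d0: "d \<noteq> 0" using assms by (metis not_squarefree_0)
  have "(\<Prod>p \<in> prime_factors d. p ^ multiplicity p d) = normalize d"
    by (rule prod_prime_factors[OF d0])
  moreover have "\<forall>p\<in>prime_factors d. multiplicity p d = 1"
    using assms d0 squarefree_factorial_semiring' by blast
  ultimately show ?thesis by simp
qed

lemma alt_pow_sum:
  assumes "finite P" "P \<noteq> {}"
  shows "(\<Sum>S\<in>Pow P. (-1::int) ^ card S) = 0"
proof -
  have "card {T. T \<subseteq> P \<and> {} \<subseteq> T \<and> even(card T)} = card {T. T \<subseteq> P \<and> {} \<subseteq> T \<and> odd(card T)}"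
    by (rule card_subsupersets_even_odd) (use assms in auto)
  then have "card {T. T \<in> Pow P \<and> even(card T)} = card {T. T \<in> Pow P \<and> odd(card T)}"
    by simp
  then show ?thesis
    by (rule sum_alternating_cancels[rotated]) (use assms in simp)
qed

lemma moebius_sum:
  fixes n :: nat
  assumes "n > 0"
  shows "(\<Sum>d | d dvd n. moebius_mu d) = (if n = 1 then 1 else 0)"
proof -
  let ?P = "prime_factors n"
  have "(\<Sum>d | d dvd n. moebius_mu d) = (\<Sum>d | d dvd n \<and> squarefree d. moebius_mu d)"
    by (rule sum.mono_neutral_right) (use assms in \<open>auto simp: moebius_mu_def\<close>)
  also have "\<dots> = (\<Sum>S\<in>Pow ?P. moebius_mu (\<Prod>S))"
  proof (rule sum.reindex_bij_witness[where i = "\<lambda>S. \<Prod>S" and j = prime_factors])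
    fix d assume d: "d \<in> {d. d dvd n \<and> squarefree d}"
    then show "\<Prod>(prime_factors d) = d" by (simp add: squarefree_prod_pf)
    show "prime_factors d \<in> Pow ?P" using d assms dvd_prime_factors[of n d] by auto
  next
    fix S assume S: "S \<in> Pow ?P"
    then have fin: "finite S" by (meson PowD finite_set_mset finite_subset)
    have pr: "\<forall>p\<in>S. prime p" using S by auto
    have sf: "squarefree (\<Prod>S)"
      by (rule squarefree_prod_coprime) (use pr in \<open>auto intro: primes_coprime squarefree_prime\<close>)
    have "prime_factors (\<Prod>S) = \<Union>((prime_factors \<circ> (\<lambda>x. x)) ` S)"
      by (rule prime_factors_prod) (use fin pr in \<open>auto\<close>)
    also have "\<dots> = S" using pr by (auto simp: prime_prime_factors)
    finally show "prime_factors (\<Prod>S) = S" .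
    have "\<Prod>S dvd n" by (rule prod_primes_dvd) (use fin S in auto)
    then show "\<Prod>S \<in> {d. d dvd n \<and> squarefree d}" using sf by simp
  next
    fix d assume d: "d \<in> {d. d dvd n \<and> squarefree d}"
    then show "moebius_mu (\<Prod>(prime_factors d)) = moebius_mu d" by (simp add: squarefree_prod_pf)
  qed
  also have "\<dots> = (\<Sum>S\<in>Pow ?P. (-1) ^ card S)"
    by (rule sum.cong) (auto intro!: moebius_prod dest: finite_subset)
  also have "\<dots> = (if n = 1 then 1 else 0)"
  proof (cases "n = 1")
    case True then show ?thesis by simp
  next
    case False
    then obtain p where "prime p" "p dvd n" using prime_factor_nat by blast
    then have "?P \<noteq> {}" using assms by (auto simp: prime_factors_dvd)
    then show ?thesis using False alt_pow_sum[of ?P] by simp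
  qed
  finally show ?thesis .
qed

lemma divisor_sum_swap:
  fixes n :: nat and F :: "nat \<Rightarrow> nat \<Rightarrow> 'a::comm_monoid_add"
  assumes n: "n > 0"
  shows "(\<Sum>d | d dvd n. \<Sum>e | e dvd (n div d). F d e) = (\<Sum>m | m dvd n. \<Sum>d | d dvd m. F d (m div d))"
proof -
  have fin1: "finite {d. d dvd n}" using n by simp
  have pos: "k > 0" if "k dvd n" for k using that n by (cases "k = 0") auto
  have fin2: "\<forall>d\<in>{d. d dvd n}. finite {e. e dvd (n div d)}"
  proof
    fix d assume "d \<in> {d. d dvd n}"
    then have "n div d > 0" using n by (metis dvd_div_eq_0_iff gr0I mem_Collect_eq not_gr0)
    then show "finite {e. e dvd (n div d)}" by (rule finite_divisors_nat)
  qed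
  have fin3: "\<forall>m\<in>{m. m dvd n}. finite {d. d dvd m}"
    using pos finite_divisors_nat by blast
  have "(\<Sum>d | d dvd n. \<Sum>e | e dvd (n div d). F d e) = (\<Sum>(d,e)\<in>Sigma {d. d dvd n} (\<lambda>d. {e. e dvd (n div d)}). F d e)"
    by (rule sum.Sigma[OF fin1 fin2])
  also have "\<dots> = (\<Sum>(m,d)\<in>Sigma {m. m dvd n} (\<lambda>m. {d. d dvd m}). F d (m div d))"
  proof (rule sum.reindex_bij_witness[where i = "\<lambda>(m,d). (d, m div d)" and j = "\<lambda>(d,e). (d*e, d)"])
    fix a assume a: "a \<in> Sigma {d. d dvd n} (\<lambda>d. {e. e dvd (n div d)})"
    then obtain d e where ae: "a = (d,e)" "d dvd n" "e dvd n div d" by auto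
    have d0: "d > 0" using ae pos by blast
    show "(case (case a of (d, e) \<Rightarrow> (d * e, d)) of (m, d) \<Rightarrow> (d, m div d)) = a"
      using ae d0 by simp
    from ae(3) obtain k where k: "n div d = e * k" by (auto elim: dvdE)
    have "n = d * (n div d)" using ae(2) by simp
    also have "\<dots> = (d * e) * k" using k by simp
    finally have "d * e dvd n" by (rule dvdI)
    then show "(case a of (d, e) \<Rightarrow> (d * e, d)) \<in> Sigma {m. m dvd n} (\<lambda>m. {d. d dvd m})"
      using ae by simp
    show "(case case a of (d, e) \<Rightarrow> (d * e, d) of (m, d) \<Rightarrow> F d (m div d)) = (case a of (d, e) \<Rightarrow> F d e)"
      using ae d0 by simp
  next
    fix b assume b: "b \<in> Sigma {m. m dvd n} (\<lambda>m. {d. d dvd m})"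
    then obtain m d where bm: "b = (m,d)" "m dvd n" "d dvd m" by auto
    show "(case case b of (m, d) \<Rightarrow> (d, m div d) of (d, e) \<Rightarrow> (d * e, d)) = b"
      using bm by simp
    have dn: "d dvd n" using bm dvd_trans by blast
    have "m div d dvd n div d" using bm(2,3) dn by (simp add: div_dvd_div)
    then show "(case b of (m, d) \<Rightarrow> (d, m div d)) \<in> Sigma {d. d dvd n} (\<lambda>d. {e. e dvd n div d})"
      using bm dvd_trans[OF bm(3) bm(2)] by simp
  qed
  also have "\<dots> = (\<Sum>m | m dvd n. \<Sum>d | d dvd m. F d (m div d))"
    by (rule sum.Sigma[OF fin1 fin3, symmetric])
  finally show ?thesis .
qed

lemma divisor_sum_flip:
  fixes m :: nat and f :: "nat \<Rightarrow> 'a::comm_monoid_add"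
  assumes m: "m > 0"
  shows "(\<Sum>d | d dvd m. f (m div d)) = (\<Sum>d | d dvd m. f d)"
proof (rule sum.reindex_bij_witness[where i = "\<lambda>d. m div d" and j = "\<lambda>d. m div d"])
  fix d assume "d \<in> {d. d dvd m}"
  then have d: "d dvd m" by simp
  then obtain k where k: "m = d * k" by (auto elim: dvdE)
  have d0: "d > 0" and k0: "k > 0" using m k by (metis gr0I mult_is_0)+
  show "m div (m div d) = d" using k d0 k0 by simp
  show "m div d \<in> {d. d dvd m}" using k d0 by simp
next
  fix d assume "d \<in> {d. d dvd m}"
  then have d: "d dvd m" by simp
  then obtain k where k: "m = d * k" by (auto elim: dvdE)
  have d0: "d > 0" and k0: "k > 0" using m k by (metis gr0I mult_is_0)+
  show "m div (m div d) = d" using k d0 k0 by simp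
  show "m div d \<in> {d. d dvd m}" using k d0 by simp
qed simp

lemma pcompose_pow: "pcompose (p ^ k) q = (pcompose p q) ^ k"
  by (induction k) (simp_all add: pcompose_mult pcompose_1)

lemma sp_sum: "subst_pow (sum f A) d = (\<Sum>i\<in>A. subst_pow (f i) d)"
  unfolding subst_pow_def by (rule pcompose_sum)

lemma sp_smult: "subst_pow (smult c p) d = smult c (subst_pow p d)"
  unfolding subst_pow_def by (rule pcompose_smult)

lemma sp_mult: "subst_pow (p * q) d = subst_pow p d * subst_pow q d"
  unfolding subst_pow_def by (rule pcompose_mult)

lemma pcompose_monom1: "pcompose (monom 1 e) q = q ^ e"
  by (simp add: monom_altdef pcompose_pow pcompose_pCons)

lemma sp_comp: "subst_pow (subst_pow p e) d = subst_pow p (e * d)"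
proof -
  have "subst_pow (subst_pow p e) d = pcompose p (pcompose (monom 1 e) (monom 1 d))"
    unfolding subst_pow_def by (simp add: pcompose_assoc)
  also have "pcompose (monom 1 e) (monom 1 d) = (monom 1 (e * d) :: int poly)"
    by (simp add: pcompose_monom1 monom_power mult.commute)
  finally show ?thesis unfolding subst_pow_def .
qed

lemma sp_1: "subst_pow p 1 = p"
proof -
  have "monom (1::int) 1 = [:0, 1:]" by (simp add: monom_altdef)
  then show ?thesis unfolding subst_pow_def by simp
qed

lemma sp_qint: "subst_pow (qint k [:0, 1:]) d = qint k (monom 1 d)"
  unfolding qint_def sp_sum unfolding subst_pow_def
  by (simp add: pcompose_pow pcompose_pCons)

lemma smult_sum2: "smult c (\<Sum>i\<in>A. f i) = (\<Sum>i\<in>A. smult c (f i))"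
  by (induct A rule: infinite_finite_induct) (auto simp: smult_add_right)

lemma sp_Suc0: "subst_pow p (Suc 0) = p"
  using sp_1 by simp

definition Tr :: "(nat \<Rightarrow> int poly) \<Rightarrow> nat \<Rightarrow> int poly" where
  "Tr h n = (\<Sum>d | d dvd n. subst_pow (h (n div d)) d)"

definition Mo :: "(nat \<Rightarrow> int poly) \<Rightarrow> nat \<Rightarrow> int poly" where
  "Mo a n = (\<Sum>d | d dvd n. smult (moebius_mu d) (subst_pow (a (n div d)) d))"

lemma Mo_Tr:
  assumes n: "n > 0"
  shows "Mo (Tr h) n = h n"
proof -
  have pos: "k > 0" if "k dvd n" for k using that n by (cases "k = 0") auto
  have "Mo (Tr h) n = (\<Sum>d | d dvd n. \<Sum>e | e dvd (n div d).
          smult (moebius_mu d) (subst_pow (h (n div d div e)) (e * d)))"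
    unfolding Mo_def Tr_def
    by (rule sum.cong) (simp_all add: sp_sum smult_sum2 sp_comp)
  also have "\<dots> = (\<Sum>m | m dvd n. \<Sum>d | d dvd m.
          smult (moebius_mu d) (subst_pow (h (n div d div (m div d))) (m div d * d)))"
    by (rule divisor_sum_swap[OF n])
  also have "\<dots> = (\<Sum>m | m dvd n. smult (\<Sum>d | d dvd m. moebius_mu d) (subst_pow (h (n div m)) m))"
  proof (rule sum.cong[OF refl])
    fix m assume m: "m \<in> {m. m dvd n}"
    show "(\<Sum>d | d dvd m. smult (moebius_mu d) (subst_pow (h (n div d div (m div d))) (m div d * d)))
        = smult (\<Sum>d | d dvd m. moebius_mu d) (subst_pow (h (n div m)) m)"
      unfolding smult_sum
    proof (rule sum.cong[OF refl])
      fix d assume d: "d \<in> {d. d dvd m}"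
      then have "n div d div (m div d) = n div m" using m by (simp add: div_div_div_same)
      moreover have "m div d * d = m" using d by simp
      ultimately show "smult (moebius_mu d) (subst_pow (h (n div d div (m div d))) (m div d * d))
          = smult (moebius_mu d) (subst_pow (h (n div m)) m)" by simp
    qed
  qed
  also have "\<dots> = (\<Sum>m | m dvd n. if m = 1 then h n else 0)"
    by (rule sum.cong[OF refl]) (use pos in \<open>simp add: moebius_sum sp_1 sp_Suc0\<close>)
  also have "\<dots> = h n" using n by simp
  finally show ?thesis .
qed

lemma Tr_Mo:
  assumes n: "n > 0"
  shows "Tr (Mo a) n = a n"
proof -
  have pos: "k > 0" if "k dvd n" for k using that n by (cases "k = 0") auto
  have "Tr (Mo a) n = (\<Sum>d | d dvd n. \<Sum>e | e dvd (n div d).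
          smult (moebius_mu e) (subst_pow (a (n div d div e)) (e * d)))"
    unfolding Mo_def Tr_def
    by (rule sum.cong) (simp_all add: sp_sum sp_smult sp_comp)
  also have "\<dots> = (\<Sum>m | m dvd n. \<Sum>d | d dvd m.
          smult (moebius_mu (m div d)) (subst_pow (a (n div d div (m div d))) (m div d * d)))"
    by (rule divisor_sum_swap[OF n])
  also have "\<dots> = (\<Sum>m | m dvd n. smult (\<Sum>d | d dvd m. moebius_mu (m div d)) (subst_pow (a (n div m)) m))"
  proof (rule sum.cong[OF refl])
    fix m assume m: "m \<in> {m. m dvd n}"
    show "(\<Sum>d | d dvd m. smult (moebius_mu (m div d)) (subst_pow (a (n div d div (m div d))) (m div d * d)))
        = smult (\<Sum>d | d dvd m. moebius_mu (m div d)) (subst_pow (a (n div m)) m)"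
      unfolding smult_sum
    proof (rule sum.cong[OF refl])
      fix d assume d: "d \<in> {d. d dvd m}"
      then have "n div d div (m div d) = n div m" using m by (simp add: div_div_div_same)
      moreover have "m div d * d = m" using d by simp
      ultimately show "smult (moebius_mu (m div d)) (subst_pow (a (n div d div (m div d))) (m div d * d))
          = smult (moebius_mu (m div d)) (subst_pow (a (n div m)) m)" by simp
    qed
  qed
  also have "\<dots> = (\<Sum>m | m dvd n. if m = 1 then a n else 0)"
    by (rule sum.cong[OF refl]) (use pos in \<open>simp add: divisor_sum_flip moebius_sum sp_1 sp_Suc0\<close>)
  also have "\<dots> = a n" using n by simp
  finally show ?thesis .
qed

theorem mainTheorem13:
  fixes a :: "nat \<Rightarrow> int poly"
  shows "q_gauss a \<longleftrightarrow>
    (\<exists>g :: nat \<Rightarrow> int poly. \<forall>n\<ge>1.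
       a n = (\<Sum>d | d dvd n. qint (n div d) (monom 1 d) * subst_pow (g (n div d)) d))"
proof
  assume qg: "q_gauss a"
  have "\<forall>n. \<exists>k. n \<ge> 1 \<longrightarrow> Mo a n = qint n [:0, 1:] * k"
    using qg unfolding q_gauss_def Mo_def by (auto elim!: dvdE)
  then obtain g where g: "\<And>n. n \<ge> 1 \<Longrightarrow> Mo a n = qint n [:0, 1:] * g n"
    by metis
  show "\<exists>g :: nat \<Rightarrow> int poly. \<forall>n\<ge>1.
       a n = (\<Sum>d | d dvd n. qint (n div d) (monom 1 d) * subst_pow (g (n div d)) d)"
  proof (intro exI allI impI)
    fix n :: nat assume n: "n \<ge> 1"
    have pos: "n div d \<ge> 1" if "d dvd n" for d
      using that n by (metis One_nat_def Suc_leI dvd_div_eq_0_iff not_one_le_zero not_gr0)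
    have "a n = Tr (Mo a) n" using Tr_Mo n by simp
    also have "\<dots> = (\<Sum>d | d dvd n. qint (n div d) (monom 1 d) * subst_pow (g (n div d)) d)"
      unfolding Tr_def
    proof (rule sum.cong[OF refl])
      fix d assume "d \<in> {d. d dvd n}"
      then have "Mo a (n div d) = qint (n div d) [:0, 1:] * g (n div d)"
        using g pos by simp
      then show "subst_pow (Mo a (n div d)) d = qint (n div d) (monom 1 d) * subst_pow (g (n div d)) d"
        by (simp add: sp_mult sp_qint)
    qed
    finally show "a n = (\<Sum>d | d dvd n. qint (n div d) (monom 1 d) * subst_pow (g (n div d)) d)" .
  qed
next
  assume "\<exists>g :: nat \<Rightarrow> int poly. \<forall>n\<ge>1.
       a n = (\<Sum>d | d dvd n. qint (n div d) (monom 1 d) * subst_pow (g (n div d)) d)"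
  then obtain g :: "nat \<Rightarrow> int poly" where g: "\<And>n. n \<ge> 1 \<Longrightarrow>
       a n = (\<Sum>d | d dvd n. qint (n div d) (monom 1 d) * subst_pow (g (n div d)) d)" by blast
  define h where "h n = qint n [:0, 1:] * g n" for n
  have aT: "a n = Tr h n" if n: "n \<ge> 1" for n
    unfolding g[OF n] Tr_def h_def
    by (rule sum.cong[OF refl]) (simp add: sp_mult sp_qint)
  show "q_gauss a"
    unfolding q_gauss_def
  proof (intro allI impI)
    fix n :: nat assume n: "n \<ge> 1"
    have pos: "n div d \<ge> 1" if "d dvd n" for d
      using that n by (metis One_nat_def Suc_leI dvd_div_eq_0_iff not_one_le_zero not_gr0)
    have "(\<Sum>d | d dvd n. smult (moebius_mu d) (subst_pow (a (n div d)) d)) = Mo (Tr h) n"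
      unfolding Mo_def
    proof (rule sum.cong[OF refl])
      fix d assume "d \<in> {d. d dvd n}"
      then have "a (n div d) = Tr h (n div d)" using aT pos by simp
      then show "smult (moebius_mu d) (subst_pow (a (n div d)) d) = smult (moebius_mu d) (subst_pow (Tr h (n div d)) d)"
        by simp
    qed
    also have "\<dots> = h n" using Mo_Tr n by simp
    finally show "qint n [:0, 1:] dvd (\<Sum>d | d dvd n. smult (moebius_mu d) (subst_pow (a (n div d)) d))"
      by (simp add: h_def)
  qed
qed

end
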